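(* Let $(X,\mu)$ be any measure space, let $N\geq 2$ be an integer, and let $f_1,\dots,f_N$ be non-negative measurable functions on $X$ with $0<\sum_{j=1}^N \|f_j\|_p^p<\infty$. Define $$\Gamma_p(f_1,\dots,f_N) := \frac{\left\Vert \binom{N}{2}^{-1}\sum_{1\le i< j\le N} f_if_j\right\Vert_{p/2}^{p/2}}{\frac1N \sum_{j=1}^N \|f_j\|_p^p}$$ and $$r(N,p) = \frac{2N}{2N+(p-2)(2N-1)}.$$ Then for all $p\in(2,\infty)$, $$\Big\|\sum_{j=1}^N f_j\Big\|_p^p \leq \Big[\,1 + (N-1)\,\Gamma_p(f_1,\dots,f_N)^{r(N,p)}\Big]^{p-1}\sum_{j=1}^N \|f_j\|_p^p,$$ and for all $p\in(1,2)$ the reverse inequality ($\geq$) holds.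
   Context: For any real $q\neq 0$ and measurable $f$, $\|f\|_q := \left(\int |f|^q\,d\mu\right)^{1/q}$ (this notation is used even when $q<1$, where it is not a norm). One has $0\le\Gamma_p\le 1$. *)

theory Defs
  imports "HOL-Analysis.Analysis"
begin

definition qpow_norm :: "'a measure \<Rightarrow> real \<Rightarrow> ('a \<Rightarrow> real) \<Rightarrow> ennreal" where
  "qpow_norm M q g = (\<integral>\<^sup>+ x. ennreal (\<bar>g x\<bar> powr q) \<partial>M)"

definition Gamma_p :: "'a measure \<Rightarrow> real \<Rightarrow> nat \<Rightarrow> (nat \<Rightarrow> 'a \<Rightarrow> real) \<Rightarrow> real" where
  "Gamma_p M p N f =
     enn2real (qpow_norm M (p/2)
        (\<lambda>x. inverse (real (N choose 2)) * (\<Sum>i\<in>{1..N}. \<Sum>j\<in>{i<..N}. f i x * f j x)))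
     / ((1 / real N) * enn2real (\<Sum>j\<in>{1..N}. qpow_norm M p (f j)))"

definition r_exp :: "nat \<Rightarrow> real \<Rightarrow> real" where
  "r_exp N p = 2 * real N / (2 * real N + (p - 2) * (2 * real N - 1))"

end

theory Submission
  imports Defs
begin


lemma holder_sum:
  fixes u v :: "'i \<Rightarrow> real"
  assumes fin: "finite I" and u: "\<And>i. i \<in> I \<Longrightarrow> u i \<ge> 0" and v: "\<And>i. i \<in> I \<Longrightarrow> v i \<ge> 0"
    and al: "\<alpha> > 0" and be: "\<beta> > 0" and ab: "\<alpha> + \<beta> = 1"
  shows "(\<Sum>i\<in>I. u i powr \<alpha> * v i powr \<beta>) \<le> (\<Sum>i\<in>I. u i) powr \<alpha> * (\<Sum>i\<in>I. v i) powr \<beta>"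
proof (cases "(\<Sum>i\<in>I. u i) = 0 \<or> (\<Sum>i\<in>I. v i) = 0")
  case True
  then have "\<forall>i\<in>I. u i = 0 \<or> v i = 0" using sum_nonneg_eq_0_iff[OF fin] u v by blast
  then have "(\<Sum>i\<in>I. u i powr \<alpha> * v i powr \<beta>) = 0" by (intro sum.neutral) auto
  then show ?thesis by simp
next
  case False
  define U where "U = (\<Sum>i\<in>I. u i)"
  define V where "V = (\<Sum>i\<in>I. v i)"
  have U: "U > 0" using False u sum_nonneg[of I u] unfolding U_def by force
  have V: "V > 0" using False v sum_nonneg[of I v] unfolding V_def by force
  have key: "(u i / U) powr \<alpha> * (v i / V) powr \<beta> \<le> \<alpha> * (u i / U) + \<beta> * (v i / V)" if i: "i \<in> I" for i
  proof (cases "u i = 0 \<or> v i = 0")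
    case True then show ?thesis using u[OF i] v[OF i] U V al be by auto
  next
    case False
    then have "u i > 0" "v i > 0" using u[OF i] v[OF i] by auto
    then show ?thesis using Youngs_inequality_0[of \<alpha> \<beta> "u i / U" "v i / V"] al be ab U V by auto
  qed
  have "(\<Sum>i\<in>I. (u i / U) powr \<alpha> * (v i / V) powr \<beta>) \<le> (\<Sum>i\<in>I. \<alpha> * (u i / U) + \<beta> * (v i / V))"
    by (rule sum_mono) (rule key)
  also have "\<dots> = \<alpha> * ((\<Sum>i\<in>I. u i) / U) + \<beta> * ((\<Sum>i\<in>I. v i) / V)"
    by (simp add: sum.distrib sum_distrib_left sum_divide_distrib)
  also have "\<dots> = 1" using U V ab unfolding U_def V_def by simp
  finally have 1: "(\<Sum>i\<in>I. (u i / U) powr \<alpha> * (v i / V) powr \<beta>) \<le> 1" .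
  have "(\<Sum>i\<in>I. (u i / U) powr \<alpha> * (v i / V) powr \<beta>) = (\<Sum>i\<in>I. u i powr \<alpha> * v i powr \<beta>) / (U powr \<alpha> * V powr \<beta>)"
    using U V u v by (simp add: powr_divide sum_divide_distrib)
  with 1 have "(\<Sum>i\<in>I. u i powr \<alpha> * v i powr \<beta>) \<le> U powr \<alpha> * V powr \<beta>"
    using U V by (simp add: divide_le_eq)
  then show ?thesis unfolding U_def V_def .
qed

lemma sum_sq_pairs:
  fixes a :: "nat \<Rightarrow> real"
  shows "(\<Sum>i\<in>{1..N}. a i)^2 = (\<Sum>i\<in>{1..N}. (a i)^2) + 2 * (\<Sum>i\<in>{1..N}. \<Sum>j\<in>{i<..N}. a i * a j)"
proof (induction N)
  case 0 then show ?case by simp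
next
  case (Suc n)
  have e: "(\<Sum>i\<in>{1..Suc n}. \<Sum>j\<in>{i<..Suc n}. a i * a j) = (\<Sum>i\<in>{1..n}. \<Sum>j\<in>{i<..n}. a i * a j) + (\<Sum>i\<in>{1..n}. a i * a (Suc n))"
  proof -
    have "(\<Sum>i\<in>{1..Suc n}. \<Sum>j\<in>{i<..Suc n}. a i * a j) = (\<Sum>i\<in>{1..n}. \<Sum>j\<in>{i<..Suc n}. a i * a j)"
      by (simp add: sum.atLeast1_atMost_eq)
    also have "\<dots> = (\<Sum>i\<in>{1..n}. (\<Sum>j\<in>{i<..n}. a i * a j) + a i * a (Suc n))"
    proof (rule sum.cong[OF refl])
      fix i assume "i \<in> {1..n}"
      then have "{i<..Suc n} = insert (Suc n) {i<..n}" by auto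
      then show "(\<Sum>j\<in>{i<..Suc n}. a i * a j) = (\<Sum>j\<in>{i<..n}. a i * a j) + a i * a (Suc n)" by simp
    qed
    finally show ?thesis by (simp add: sum.distrib)
  qed
  show ?case
    unfolding e using Suc.IH
    by (simp add: power2_eq_square algebra_simps sum_distrib_left sum_distrib_right)
qed



definition phi :: "nat \<Rightarrow> real \<Rightarrow> real \<Rightarrow> real" where
  "phi N p g = (1 + (real N - 1) * g powr r_exp N p) powr (p - 1)"

definition phid :: "nat \<Rightarrow> real \<Rightarrow> real \<Rightarrow> real" where
  "phid N p g = (p - 1) * (1 + (real N - 1) * g powr r_exp N p) powr (p - 2)
      * ((real N - 1) * (r_exp N p * g powr (r_exp N p - 1)))"

lemma D_pos: assumes "N \<ge> 2" "p > 1" shows "2 * real N + (p - 2) * (2 * real N - 1) > 0"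
proof (cases "p \<ge> 2")
  case True then show ?thesis using assms by (simp add: add_pos_nonneg)
next
  case False
  have "(2 - p) * (2 * real N - 1) < 1 * (2 * real N - 1)"
    using assms False by (intro mult_strict_right_mono) auto
  then show ?thesis by (simp add: algebra_simps)
qed

lemma r_pos: assumes "N \<ge> 2" "p > 1" shows "r_exp N p > 0"
  using D_pos[OF assms] assms unfolding r_exp_def by simp

lemma phi_deriv:
  assumes "g > 0" "N \<ge> 2" "p > 1"
  shows "(phi N p has_real_derivative phid N p g) (at g)"
proof -
  have pos: "1 + (real N - 1) * g powr r_exp N p > 0" using assms by (simp add: add_pos_nonneg)
  show ?thesis unfolding phi_def phid_def
    apply (rule derivative_eq_intros refl | use assms pos in simp)+
    done
qed



lemma phid_mono:
  assumes N: "N \<ge> 2" and p: "p > 1" "p \<noteq> 2" and xy: "0 < x" "x \<le> y" "y \<le> 1"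
  shows "p > 2 \<Longrightarrow> phid N p y \<le> phid N p x" and "p < 2 \<Longrightarrow> phid N p x \<le> phid N p y"
proof -
  define D where "D = 2 * real N + (p - 2) * (2 * real N - 1)"
  define c where "c = real N - 1"
  define r where "r = r_exp N p"
  define a where "a = - (2 * real N - 1) / D"
  define b where "b = 1 / D"
  have D: "D > 0" using D_pos[OF N p(1)] unfolding D_def .
  have c: "c \<ge> 1" using N unfolding c_def by simp
  have r: "r = 2 * real N / D" unfolding r_def r_exp_def D_def by simp
  have rpos: "r > 0" using r_pos[OF N p(1)] unfolding r_def .
  have ra: "r - 1 = a * (p - 2)" unfolding r a_def using D by (simp add: field_simps D_def)
  have ba: "b = a + r" unfolding r a_def b_def using D by (simp add: field_simps)
  have acb: "a + c * b < 0" unfolding a_def b_def c_def using D N by (simp add: field_simps)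
  have bpos: "b > 0" unfolding b_def using D by simp
  define h where "h t = t powr a + c * t powr b" for t
  have phid_eq: "phid N p t = (p - 1) * c * r * h t powr (p - 2)" if t: "t > 0" for t
  proof -
    have "h t = t powr a * (1 + c * t powr r)" unfolding h_def ba using t by (simp add: powr_add algebra_simps)
    then have "h t powr (p - 2) = t powr (r - 1) * (1 + c * t powr r) powr (p - 2)"
      using t by (simp add: powr_mult powr_powr ra)
    then show ?thesis unfolding phid_def c_def r_def by simp
  qed
  have hpos: "h t > 0" if "t > 0" for t using that c unfolding h_def by (simp add: add_pos_nonneg)
  have hmono: "h y \<le> h x"
  proof (rule DERIV_nonpos_imp_nonincreasing[of x y h])
    show "x \<le> y" by fact
    fix t assume t: "x \<le> t" "t \<le> y"
    then have t0: "t > 0" and t1: "t \<le> 1" using xy by auto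
    have der: "(h has_real_derivative a * t powr (a - 1) + c * (b * t powr (b - 1))) (at t)"
      unfolding h_def using t0 by (auto intro!: derivative_eq_intros)
    have "t powr r \<le> 1" using powr_mono2[of r t 1] rpos t0 t1 by simp
    then have "c * b * t powr r \<le> c * b" using c bpos by (simp add: mult_left_le)
    then have "a + c * b * t powr r \<le> 0" using acb by linarith
    then have "t powr (a - 1) * (a + c * b * t powr r) \<le> 0" by (simp add: mult_nonneg_nonpos)
    moreover have "a * t powr (a - 1) + c * (b * t powr (b - 1)) = t powr (a - 1) * (a + c * b * t powr r)"
    proof -
      have "t powr (b - 1) = t powr (a - 1) * t powr r" unfolding ba by (simp add: powr_add[symmetric] algebra_simps)
      then show ?thesis by (simp add: algebra_simps)
    qed
    ultimately show "\<exists>y. (h has_real_derivative y) (at t) \<and> y \<le> 0" using der by auto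
  qed
  have hxy: "h y > 0" "h x > 0" using hpos xy by auto
  have K: "(p - 1) * c * r > 0" using p c rpos by simp
  show "phid N p y \<le> phid N p x" if "p > 2"
  proof -
    have "h y powr (p - 2) \<le> h x powr (p - 2)"
      using powr_mono2[of "p-2" "h y" "h x"] hmono hxy xy that by force
    then show ?thesis using phid_eq xy K by (auto intro: mult_left_mono)
  qed
  show "phid N p x \<le> phid N p y" if "p < 2"
  proof -
    have "h x powr (p - 2) \<le> h y powr (p - 2)"
      using powr_mono2'[of "p-2" "h y" "h x"] hmono hxy xy that by force
    then show ?thesis using phid_eq xy K by (auto intro: mult_left_mono)
  qed
qed



lemma concave_tangent:
  fixes f f' :: "real \<Rightarrow> real"
  assumes cont: "continuous_on {0..1} f"
    and der: "\<And>x. 0 < x \<Longrightarrow> x < 1 \<Longrightarrow> (f has_real_derivative f' x) (at x)"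
    and mono: "\<And>x y. 0 < x \<Longrightarrow> x \<le> y \<Longrightarrow> y \<le> 1 \<Longrightarrow> f' y \<le> f' x"
    and g: "0 \<le> g" "g \<le> 1" and G: "0 < G" "G \<le> 1"
  shows "f g \<le> f G + f' G * (g - G)"
proof -
  have dif: "f differentiable (at x)" if "0 < x" "x < 1" for x
    using der[OF that] by (auto simp: real_differentiable_def)
  consider "g = G" | "G < g" | "g < G" by linarith
  then show ?thesis
  proof cases
    case 1 then show ?thesis by simp
  next
    case 2
    have c: "continuous_on {G..g} f" by (rule continuous_on_subset[OF cont]) (use G g in auto)
    have d: "f differentiable (at x)" if "G < x" "x < g" for x
      using dif that G g by simp
    obtain l z where z: "G < z" "z < g" "DERIV f z :> l" "f g - f G = (g - G) * l"
      using MVT[OF 2 c d] by blast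
    have z01: "0 < z" "z < 1" using z G g by auto
    have "l = f' z" using DERIV_unique[OF z(3) der[OF z01]] .
    then have "l \<le> f' G" using mono[of G z] z G g by simp
    then have "(g - G) * l \<le> (g - G) * f' G" using 2 by (intro mult_left_mono) auto
    then show ?thesis using z(4) by (simp add: algebra_simps)
  next
    case 3
    have c: "continuous_on {g..G} f" by (rule continuous_on_subset[OF cont]) (use G g in auto)
    have d: "f differentiable (at x)" if "g < x" "x < G" for x
      using dif that G g by simp
    obtain l z where z: "g < z" "z < G" "DERIV f z :> l" "f G - f g = (G - g) * l"
      using MVT[OF 3 c d] by blast
    have z01: "0 < z" "z < 1" using z G g by auto
    have "l = f' z" using DERIV_unique[OF z(3) der[OF z01]] .
    then have "f' G \<le> l" using mono[of z G] z G g by simp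
    then have "(G - g) * f' G \<le> (G - g) * l" using 3 by (intro mult_left_mono) auto
    then show ?thesis using z(4) by (simp add: algebra_simps)
  qed
qed

lemma phi_cont: assumes "N \<ge> 2" "p > 1" shows "continuous_on {0..1} (phi N p)"
proof -
  have r: "r_exp N p > 0" using r_pos[OF assms] .
  have c1: "continuous_on {0..1} (\<lambda>g::real. g powr r_exp N p)"
    by (rule continuous_on_powr') (use r in \<open>auto intro: continuous_intros\<close>)
  have pos: "1 + (real N - 1) * g powr r_exp N p \<noteq> 0" if "0 \<le> g" for g::real
  proof -
    have "(real N - 1) * g powr r_exp N p \<ge> 0" using assms by simp
    then show ?thesis by linarith
  qed
  have "continuous_on {0..1} (\<lambda>g::real. (1 + (real N - 1) * g powr r_exp N p) powr (p - 1))"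
    by (rule continuous_on_powr) (use assms in \<open>auto intro!: continuous_intros c1 pos\<close>)
  then show ?thesis unfolding phi_def[abs_def] .
qed

lemma phi_tangent:
  assumes N: "N \<ge> 2" and g: "0 \<le> g" "g \<le> 1" and G: "0 < G" "G \<le> 1"
  shows "p > 2 \<Longrightarrow> phi N p g \<le> phi N p G + phid N p G * (g - G)"
    and "1 < p \<Longrightarrow> p < 2 \<Longrightarrow> phi N p g \<ge> phi N p G + phid N p G * (g - G)"
proof -
  show "phi N p g \<le> phi N p G + phid N p G * (g - G)" if p: "p > 2"
    by (rule concave_tangent[OF phi_cont phi_deriv phid_mono(1)]) (use N p g G in auto)
  show "phi N p g \<ge> phi N p G + phid N p G * (g - G)" if p: "1 < p" "p < 2"
  proof -
    have "(\<lambda>x. - phi N p x) g \<le> (\<lambda>x. - phi N p x) G + (\<lambda>x. - phid N p x) G * (g - G)"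
    proof (rule concave_tangent)
      show "continuous_on {0..1} (\<lambda>x. - phi N p x)" using phi_cont[OF N p(1)] by (intro continuous_intros)
      show "((\<lambda>x. - phi N p x) has_real_derivative - phid N p x) (at x)" if "0 < x" "x < 1" for x
        using phi_deriv[of x N p] that N p by (auto intro: derivative_eq_intros)
      show "- phid N p y \<le> - phid N p x" if "0 < x" "x \<le> y" "y \<le> 1" for x y
        using phid_mono(2)[of N p x y] that N p by auto
    qed (use g G in auto)
    then show ?thesis by simp
  qed
qed



lemma core:
  fixes s1 S T P :: real
  assumes N: "N \<ge> 2" and p: "p > 1" "p \<noteq> 2"
    and s1: "s1 > 0" and S: "S > 0" and T: "T > 0" and P: "P \<ge> 0"
    and sq: "s1^2 = T + real N * (real N - 1) * P"
    and SS: "S \<le> s1 powr p" and PM: "s1 powr p \<le> real N powr (p - 1) * S"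
    and CS: "s1^2 \<le> real N * T"
    and H1: "p > 2 \<Longrightarrow> T \<le> s1 powr ((p - 2) / (p - 1)) * S powr (1 / (p - 1))"
    and H2: "p < 2 \<Longrightarrow> S \<le> s1 powr (2 - p) * T powr (p - 1)"
  shows "real N * P powr (p / 2) \<le> S"
    and "p > 2 \<Longrightarrow> s1 powr p \<le> S * phi N p (real N * P powr (p / 2) / S)"
    and "p < 2 \<Longrightarrow> S * phi N p (real N * P powr (p / 2) / S) \<le> s1 powr p"
proof -
  define c where "c = real N - 1"
  define r where "r = r_exp N p"
  define \<beta> where "\<beta> = (real N - 1) / real N"
  have Npos: "real N > 0" and c1: "c \<ge> 1" using N unfolding c_def by auto
  define ls where "ls = ln s1"
  define lS where "lS = ln S"
  define lT where "lT = ln T"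
  define lN where "lN = ln (real N)"
  define lR where "lR = (p * ls - lS) / (p - 1)"
  define R where "R = exp lR"
  define \<gamma> where "\<gamma> = real N * P powr (p / 2) / S"
  have Rpos: "R > 0" unfolding R_def by simp
  have s1p: "s1 powr p = exp (p * ls)" unfolding ls_def using s1 by (simp add: powr_def)
  have Sexp: "S = exp lS" unfolding lS_def using S by simp
  have lR_eq: "(p - 1) * lR = p * ls - lS" unfolding lR_def using p by simp
  have RP: "R powr (p - 1) = s1 powr p / S"
  proof -
    have e: "lR * (p - 1) = ls * p - lS" using lR_eq by (simp add: algebra_simps)
    show ?thesis unfolding R_def s1p using S by (simp add: powr_def e exp_diff Sexp mult.commute)
  qed
  have lSle: "lS \<le> p * ls"
  proof -
    have "ln S \<le> ln (s1 powr p)" using SS S s1 by (subst ln_le_cancel_iff) auto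
    then show ?thesis unfolding lS_def ls_def by simp
  qed
  have R1: "R \<ge> 1" unfolding R_def using lSle p by (simp add: lR_def)
  have lPM: "p * ls \<le> (p - 1) * lN + lS"
  proof -
    have "ln (s1 powr p) \<le> ln (real N powr (p - 1) * S)" using PM S s1 Npos by (subst ln_le_cancel_iff) auto
    then show ?thesis unfolding ls_def lN_def lS_def using S Npos by (simp add: ln_mult)
  qed
  have RN: "R \<le> real N"
  proof -
    have "lR \<le> lN" using lPM p unfolding lR_def by (simp add: divide_le_eq algebra_simps)
    then have "exp lR \<le> exp lN" by simp
    then show ?thesis unfolding R_def lN_def using Npos by simp
  qed
  have TR1: "p > 2 \<Longrightarrow> T * R \<le> s1^2"
  proof -
    assume p2: "p > 2"
    have "ln T \<le> ln (s1 powr ((p - 2) / (p - 1)) * S powr (1 / (p - 1)))" using H1[OF p2] T s1 S by (subst ln_le_cancel_iff) auto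
    then have "lT \<le> (p - 2) / (p - 1) * ls + 1 / (p - 1) * lS" unfolding lT_def ls_def lS_def
      using s1 S by (simp add: ln_mult)
    then have "(p - 1) * lT \<le> (p - 1) * ((p - 2) / (p - 1) * ls + 1 / (p - 1) * lS)"
      using p by (intro mult_left_mono) auto
    also have "\<dots> = (p - 1) * ((p - 2) / (p - 1) * ls) + (p - 1) * (1 / (p - 1) * lS)"
      by (simp add: distrib_left)
    also have "\<dots> = (p - 2) * ls + lS" using p by simp
    finally have "(p - 1) * lT \<le> (p - 2) * ls + lS" .
    then have "(p - 1) * (lT + lR) \<le> (p - 1) * (2 * ls)" using lR_eq by (simp add: algebra_simps)
    then have "lT + lR \<le> 2 * ls" using p by simp
    then have "exp (lT + lR) \<le> exp (2 * ls)" by simp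
    moreover have "exp (lT + lR) = T * R" unfolding R_def lT_def using T by (simp add: exp_add)
    moreover have "exp (2 * ls) = s1^2" unfolding ls_def using s1
      by (simp only: mult_2 exp_add) (simp add: power2_eq_square)
    ultimately show ?thesis by simp
  qed
  have TR2: "p < 2 \<Longrightarrow> T * R \<ge> s1^2"
  proof -
    assume p2: "p < 2"
    have "ln S \<le> ln (s1 powr (2 - p) * T powr (p - 1))" using H2[OF p2] T s1 S by (subst ln_le_cancel_iff) auto
    then have "lS \<le> (2 - p) * ls + (p - 1) * lT" unfolding lT_def ls_def lS_def
      using s1 T by (simp add: ln_mult)
    then have "(p - 1) * (lT + lR) \<ge> (p - 1) * (2 * ls)" using lR_eq by (simp add: algebra_simps)
    then have "lT + lR \<ge> 2 * ls" using p by simp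
    then have "exp (lT + lR) \<ge> exp (2 * ls)" by simp
    moreover have "exp (lT + lR) = T * R" unfolding R_def lT_def using T by (simp add: exp_add)
    moreover have "exp (2 * ls) = s1^2" unfolding ls_def using s1
      by (simp only: mult_2 exp_add) (simp add: power2_eq_square)
    ultimately show ?thesis by simp
  qed
  define Q where "Q = real N * (real N - 1) * P"
  have Q: "Q = s1^2 - T" using sq unfolding Q_def by simp
  have QRe: "Q * R = s1^2 * R - T * R" unfolding Q by (simp add: left_diff_distrib)
  have Qc: "Q = real N * c * P" unfolding Q_def c_def by simp
  show g1: "real N * P powr (p / 2) \<le> S"
  proof -
    have "real N * Q = real N * s1^2 - real N * T" unfolding Q by (simp add: right_diff_distrib)
    then have "real N * Q \<le> s1^2 * (real N - 1)" using CS by (simp add: algebra_simps)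
    then have "real N * (real N * c * P) \<le> s1^2 * c" unfolding Qc c_def .
    then have "c * (real N * real N * P) \<le> c * s1^2" by (simp add: algebra_simps)
    then have "real N * real N * P \<le> s1^2" using c1 by simp
    then have Pb: "P \<le> (s1 / real N)^2" using Npos by (simp add: field_simps power2_eq_square)
    have "P powr (p / 2) \<le> ((s1 / real N)^2) powr (p / 2)" using Pb P p by (intro powr_mono2) auto
    also have "\<dots> = (s1 / real N) powr p"
    proof -
      have e: "(s1 / real N) powr 2 = (s1 / real N)^2" using s1 Npos powr_realpow[of "s1 / real N" 2] by simp
      show ?thesis by (simp only: e[symmetric] powr_powr) simp
    qed
    also have "\<dots> = s1 powr p / real N powr p" by (simp add: powr_divide s1 less_imp_le)
    finally have "real N * P powr (p / 2) \<le> real N * (s1 powr p / real N powr p)"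
      using Npos by (intro mult_left_mono) auto
    also have "\<dots> \<le> real N * (real N powr (p - 1) * S / real N powr p)"
      using PM Npos by (intro mult_left_mono divide_right_mono) auto
    also have "\<dots> = S" using Npos by (simp add: powr_diff)
    finally show ?thesis .
  qed
  have identity: "r * (p / 2 + (p / 2 - 1) * \<beta>) = 1"
  proof -
    have D: "2 * real N + (p - 2) * (2 * real N - 1) > 0" using D_pos[OF N p(1)] .
    have x: "p / 2 + (p / 2 - 1) * \<beta> = (2 * real N * p - p - 2 * real N + 2) / (2 * real N)"
      unfolding \<beta>_def using Npos by (simp add: field_simps)
    have d: "2 * real N + (p - 2) * (2 * real N - 1) = 2 * real N * p - p - 2 * real N + 2"
      by (simp add: algebra_simps)
    show ?thesis unfolding r_def r_exp_def x d using D Npos unfolding d by simp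
  qed
  have rpos: "r > 0" unfolding r_def using r_pos[OF N p(1)] .
  have bpos: "\<beta> \<ge> 0" unfolding \<beta>_def using N by simp
  have amgm: "\<beta> * ln ((R - 1) / c) \<le> lR - lN" if R1: "R > 1"
  proof -
    define z where "z = (R - 1) / c"
    have z: "z > 0" unfolding z_def using R1 c1 by simp
    have "1 powr (1 / real N) * z powr \<beta> \<le> 1 / real N * 1 + \<beta> * z"
      using Youngs_inequality_0[of "1 / real N" \<beta> 1 z] z N bpos unfolding \<beta>_def
      by (simp add: field_simps)
    also have "\<dots> = R / real N" unfolding z_def \<beta>_def c_def using N c1 Npos
      by (simp add: field_simps)
    finally have "z powr \<beta> \<le> R / real N" by simp
    then have "ln (z powr \<beta>) \<le> ln (R / real N)" using z Rpos Npos by (subst ln_le_cancel_iff) auto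
    then show ?thesis unfolding z_def[symmetric] using z Rpos Npos
      by (simp add: ln_div R_def lN_def)
  qed
  have lng: "ln \<gamma> = lN + p / 2 * ln P - lS" if "P > 0" unfolding \<gamma>_def lN_def lS_def
    using that Npos S by (simp add: ln_div ln_mult)
  have gpow: "\<gamma> powr r = exp (r * ln \<gamma>)" if "P > 0" unfolding \<gamma>_def using that Npos S
    by (simp add: powr_def)
  have lnQ: "ln Q = ln P + lN + ln c" if "P > 0" unfolding Qc lN_def using that Npos c1 by (simp add: ln_mult)
  have phi_eq: "phi N p \<gamma> = (1 + c * \<gamma> powr r) powr (p - 1)" unfolding phi_def c_def r_def ..
  have base_nn: "1 + c * \<gamma> powr r \<ge> 0" using c1 by (simp add: add_nonneg_nonneg)
  show "s1 powr p \<le> S * phi N p (real N * P powr (p / 2) / S)" if p2: "p > 2"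
  proof (cases "R = 1")
    case True
    then have "s1 powr p = S" using RP by simp
    moreover have "phi N p \<gamma> \<ge> 1" unfolding phi_eq using c1 p
      by (intro ge_one_powr_ge_zero) auto
    ultimately show ?thesis unfolding \<gamma>_def[symmetric] using S by simp
  next
    case False
    then have R1': "R > 1" using R1 by simp
    have QR: "Q * R \<ge> s1^2 * (R - 1)" using TR1[OF p2] QRe by (simp add: algebra_simps)
    have "s1^2 * (R - 1) > 0" using s1 R1' by simp
    then have "Q * R > 0" using QR by linarith
    then have Qp: "Q > 0" using Rpos by (simp add: zero_less_mult_iff)
    then have Pp: "P > 0" using Qc Npos c1 P by (simp add: zero_less_mult_iff)
    have "ln (s1^2 * (R - 1)) \<le> ln (Q * R)" using QR Qp Rpos R1' s1 by simp
    then have "2 * ls + ln (R - 1) \<le> ln Q + lR" unfolding ls_def using s1 R1' Qp Rpos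
      by (simp add: ln_mult ln_realpow R_def)
    then have lP: "ln P \<ge> 2 * ls + ln (R - 1) - lR - lN - ln c" using lnQ[OF Pp] by simp
    have lz: "ln ((R - 1) / c) = ln (R - 1) - ln c" using R1' c1 by (simp add: ln_div)
    have "ln \<gamma> \<ge> lN + p / 2 * (2 * ls + ln (R - 1) - lR - lN - ln c) - lS"
      unfolding lng[OF Pp] using lP p by (simp add: mult_left_mono)
    also have "lN + p / 2 * (2 * ls + ln (R - 1) - lR - lN - ln c) - lS
        = p / 2 * ln ((R - 1) / c) + (p / 2 - 1) * (lR - lN)"
      unfolding lz using lR_eq by (simp add: algebra_simps) (simp add: field_simps)
    also have "\<dots> \<ge> p / 2 * ln ((R - 1) / c) + (p / 2 - 1) * (\<beta> * ln ((R - 1) / c))"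
      using amgm[OF R1'] p2 by (simp add: mult_left_mono)
    finally have "ln \<gamma> \<ge> (p / 2 + (p / 2 - 1) * \<beta>) * ln ((R - 1) / c)" by (simp add: algebra_simps)
    then have "r * ln \<gamma> \<ge> r * ((p / 2 + (p / 2 - 1) * \<beta>) * ln ((R - 1) / c))" using rpos
      by (intro mult_left_mono) auto
    also have "r * ((p / 2 + (p / 2 - 1) * \<beta>) * ln ((R - 1) / c)) = ln ((R - 1) / c)"
      by (simp only: mult.assoc[symmetric] identity mult_1)
    finally have "exp (ln ((R - 1) / c)) \<le> exp (r * ln \<gamma>)" by simp
    then have "\<gamma> powr r \<ge> (R - 1) / c" unfolding gpow[OF Pp] using R1' c1 by simp
    then have "1 + c * \<gamma> powr r \<ge> R" using c1 by (simp add: field_simps)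
    then have "phi N p \<gamma> \<ge> R powr (p - 1)" unfolding phi_eq using p Rpos
      by (intro powr_mono2) auto
    then have "s1 powr p / S \<le> phi N p \<gamma>" using RP by simp
    then have "s1 powr p \<le> phi N p \<gamma> * S" using S by (simp add: pos_divide_le_eq)
    then have "S * phi N p \<gamma> \<ge> s1 powr p" by (simp add: mult.commute)
    then show ?thesis unfolding \<gamma>_def[symmetric] using S by simp
  qed
  show "S * phi N p (real N * P powr (p / 2) / S) \<le> s1 powr p" if p2: "p < 2"
  proof (cases "P = 0")
    case True
    then have "phi N p \<gamma> = 1" unfolding phi_eq \<gamma>_def by (simp add: phi_def)
    then show ?thesis unfolding \<gamma>_def[symmetric] using SS by simp
  next
    case False
    then have Pp: "P > 0" using P by simp
    then have Qp: "Q > 0" using Qc Npos c1 by simp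
    have QR: "Q * R \<le> s1^2 * (R - 1)" using TR2[OF p2] QRe by (simp add: algebra_simps)
    moreover have "Q * R > 0" using Qp Rpos by simp
    ultimately have "s1^2 * (R - 1) > 0" by linarith
    then have R1': "R > 1" using s1 by (simp add: zero_less_mult_iff)
    have "ln (Q * R) \<le> ln (s1^2 * (R - 1))" using QR Qp Rpos R1' s1 by simp
    then have "2 * ls + ln (R - 1) \<ge> ln Q + lR" unfolding ls_def using s1 R1' Qp Rpos
      by (simp add: ln_mult ln_realpow R_def)
    then have lP: "ln P \<le> 2 * ls + ln (R - 1) - lR - lN - ln c" using lnQ[OF Pp] by simp
    have lz: "ln ((R - 1) / c) = ln (R - 1) - ln c" using R1' c1 by (simp add: ln_div)
    have "ln \<gamma> \<le> lN + p / 2 * (2 * ls + ln (R - 1) - lR - lN - ln c) - lS"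
      unfolding lng[OF Pp] using lP p by (simp add: mult_left_mono)
    also have "lN + p / 2 * (2 * ls + ln (R - 1) - lR - lN - ln c) - lS
        = p / 2 * ln ((R - 1) / c) + (p / 2 - 1) * (lR - lN)"
      unfolding lz using lR_eq by (simp add: algebra_simps) (simp add: field_simps)
    also have "\<dots> \<le> p / 2 * ln ((R - 1) / c) + (p / 2 - 1) * (\<beta> * ln ((R - 1) / c))"
      using amgm[OF R1'] p2 by (simp add: mult_left_mono_neg)
    finally have "ln \<gamma> \<le> (p / 2 + (p / 2 - 1) * \<beta>) * ln ((R - 1) / c)" by (simp add: algebra_simps)
    then have "r * ln \<gamma> \<le> r * ((p / 2 + (p / 2 - 1) * \<beta>) * ln ((R - 1) / c))" using rpos
      by (intro mult_left_mono) auto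
    also have "r * ((p / 2 + (p / 2 - 1) * \<beta>) * ln ((R - 1) / c)) = ln ((R - 1) / c)"
      by (simp only: mult.assoc[symmetric] identity mult_1)
    finally have "exp (r * ln \<gamma>) \<le> exp (ln ((R - 1) / c))" by simp
    then have "\<gamma> powr r \<le> (R - 1) / c" unfolding gpow[OF Pp] using R1' c1 by simp
    then have "1 + c * \<gamma> powr r \<le> R" using c1 by (simp add: field_simps)
    then have "phi N p \<gamma> \<le> R powr (p - 1)" unfolding phi_eq using p Rpos base_nn
      by (intro powr_mono2) auto
    then have "phi N p \<gamma> \<le> s1 powr p / S" using RP by simp
    then have "phi N p \<gamma> * S \<le> s1 powr p" using S by (simp add: pos_le_divide_eq)
    then have "S * phi N p \<gamma> \<le> s1 powr p" by (simp add: mult.commute)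
    then show ?thesis unfolding \<gamma>_def[symmetric] using S by simp
  qed
qed



lemma choose2_real: "real (N choose 2) = real N * (real N - 1) / 2"
proof -
  have "2 * (N choose 2) = N * (N - 1)" by (cases N) (auto simp: choose_two)
  then have "2 * real (N choose 2) = real N * real (N - 1)" by (metis of_nat_mult of_nat_numeral)
  then show ?thesis by (cases N) auto
qed

lemma pointwise:
  fixes a :: "nat \<Rightarrow> real"
  assumes N: "N \<ge> 2" and p: "p > 1" "p \<noteq> 2" and a: "\<And>i. i \<in> {1..N} \<Longrightarrow> a i \<ge> 0"
  defines "s1 \<equiv> \<Sum>i\<in>{1..N}. a i"
    and "S \<equiv> \<Sum>i\<in>{1..N}. a i powr p"
    and "P \<equiv> inverse (real (N choose 2)) * (\<Sum>i\<in>{1..N}. \<Sum>j\<in>{i<..N}. a i * a j)"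
  shows "P \<ge> 0" and "real N * P powr (p / 2) \<le> S" and "s1 powr p \<le> real N powr (p - 1) * S"
    and "S \<le> s1 powr p"
    and "p > 2 \<Longrightarrow> s1 powr p \<le> S * phi N p (real N * P powr (p / 2) / S)"
    and "p < 2 \<Longrightarrow> S * phi N p (real N * P powr (p / 2) / S) \<le> s1 powr p"
proof -
  have Npos: "real N > 0" using N by simp
  have pairs_nn: "(\<Sum>i\<in>{1..N}. \<Sum>j\<in>{i<..N}. a i * a j) \<ge> 0"
    by (intro sum_nonneg) (use a in auto)
  show P: "P \<ge> 0" unfolding P_def using pairs_nn by simp
  have s1nn: "s1 \<ge> 0" unfolding s1_def by (intro sum_nonneg) (use a in auto)
  have Snn: "S \<ge> 0" unfolding S_def by (intro sum_nonneg) auto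
  have ale: "a i \<le> s1" if "i \<in> {1..N}" for i
    unfolding s1_def using that a by (intro member_le_sum) auto
  have SS: "S \<le> s1 powr p"
  proof -
    have "a i powr p \<le> a i * s1 powr (p - 1)" if i: "i \<in> {1..N}" for i
    proof (cases "a i = 0")
      case True then show ?thesis by simp
    next
      case False
      then have ai: "a i > 0" using a[OF i] by simp
      have "a i powr p = a i * a i powr (p - 1)" using ai by (simp add: powr_mult_base)
      also have "\<dots> \<le> a i * s1 powr (p - 1)"
        using ai ale[OF i] p by (intro mult_left_mono powr_mono2) auto
      finally show ?thesis .
    qed
    then have "S \<le> (\<Sum>i\<in>{1..N}. a i * s1 powr (p - 1))" unfolding S_def by (rule sum_mono)
    also have "\<dots> = s1 * s1 powr (p - 1)" unfolding s1_def by (simp add: sum_distrib_right)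
    also have "\<dots> = s1 powr p" using s1nn by (simp add: powr_mult_base)
    finally show ?thesis .
  qed
  show "S \<le> s1 powr p" by (rule SS)
  have PM: "s1 powr p \<le> real N powr (p - 1) * S"
  proof -
    have "(\<Sum>i\<in>{1..N}. (a i powr p) powr (1 / p) * 1 powr (1 - 1 / p))
        \<le> (\<Sum>i\<in>{1..N}. a i powr p) powr (1 / p) * (\<Sum>i\<in>{1..N}. (1::real)) powr (1 - 1 / p)"
      using p by (intro holder_sum) auto
    moreover have "(\<Sum>i\<in>{1..N}. (a i powr p) powr (1 / p) * 1 powr (1 - 1 / p)) = s1"
      unfolding s1_def using p a by (intro sum.cong refl) (simp add: powr_powr powr_one)
    ultimately have "s1 \<le> S powr (1 / p) * real N powr (1 - 1 / p)" unfolding S_def by simp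
    then have "s1 powr p \<le> (S powr (1 / p) * real N powr (1 - 1 / p)) powr p"
      using s1nn p by (intro powr_mono2) auto
    also have "\<dots> = S * real N powr (p - 1)"
    proof -
      have e1: "1 / p * p = 1" and e2: "(1 - 1 / p) * p = p - 1" using p by (auto simp: field_simps)
      show ?thesis by (simp only: powr_mult powr_powr e1 e2 powr_one[OF Snn])
    qed
    finally show ?thesis by (simp add: mult.commute)
  qed
  show "s1 powr p \<le> real N powr (p - 1) * S" by (rule PM)
  show "real N * P powr (p / 2) \<le> S"
    and "p > 2 \<Longrightarrow> s1 powr p \<le> S * phi N p (real N * P powr (p / 2) / S)"
    and "p < 2 \<Longrightarrow> S * phi N p (real N * P powr (p / 2) / S) \<le> s1 powr p"
  proof -
    have "S = 0 \<or> S > 0" using Snn by auto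
    then have "(real N * P powr (p / 2) \<le> S)
      \<and> (p > 2 \<longrightarrow> s1 powr p \<le> S * phi N p (real N * P powr (p / 2) / S))
      \<and> (p < 2 \<longrightarrow> S * phi N p (real N * P powr (p / 2) / S) \<le> s1 powr p)"
    proof
      assume S0: "S = 0"
      have "\<forall>i\<in>{1..N}. a i powr p = 0" using S0 unfolding S_def
        by (subst sum_nonneg_eq_0_iff[symmetric]) auto
      then have a0: "\<forall>i\<in>{1..N}. a i = 0" by simp
      then have "s1 = 0" "P = 0" unfolding s1_def P_def by auto
      then show ?thesis using S0 by simp
    next
      assume Spos: "S > 0"
      obtain i where i: "i \<in> {1..N}" "a i \<noteq> 0"
        using Spos unfolding S_def by (metis (no_types, lifting) powr_0 sum.neutral less_irrefl)
      have ai: "a i > 0" using a[OF i(1)] i(2) by simp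
      have s1: "s1 > 0" using ale[OF i(1)] ai by simp
      define T where "T = (\<Sum>i\<in>{1..N}. (a i)^2)"
      have T: "T > 0"
      proof -
        have "(a i)^2 \<le> T" unfolding T_def using i by (intro member_le_sum) auto
        then show ?thesis using ai by (smt (verit) zero_less_power)
      qed
      have sq: "s1^2 = T + real N * (real N - 1) * P"
      proof -
        have "s1^2 = T + 2 * (\<Sum>i\<in>{1..N}. \<Sum>j\<in>{i<..N}. a i * a j)"
          unfolding s1_def T_def by (rule sum_sq_pairs)
        moreover have "real N * (real N - 1) * P = 2 * (\<Sum>i\<in>{1..N}. \<Sum>j\<in>{i<..N}. a i * a j)"
          unfolding P_def choose2_real using N by (simp add: field_simps)
        ultimately show ?thesis by simp
      qed
      have CS: "s1^2 \<le> real N * T"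
      proof -
        have "(\<Sum>i\<in>{1..N}. a i * 1)^2 \<le> (\<Sum>i\<in>{1..N}. (a i)^2) * (\<Sum>i\<in>{1..N}. (1::real)^2)"
          by (rule Cauchy_Schwarz_ineq_sum)
        then show ?thesis unfolding s1_def T_def by (simp add: mult.commute)
      qed
      have H1: "T \<le> s1 powr ((p - 2) / (p - 1)) * S powr (1 / (p - 1))" if p2: "p > 2"
      proof -
        have "(\<Sum>i\<in>{1..N}. a i powr ((p - 2) / (p - 1)) * (a i powr p) powr (1 / (p - 1)))
          \<le> (\<Sum>i\<in>{1..N}. a i) powr ((p - 2) / (p - 1)) * (\<Sum>i\<in>{1..N}. a i powr p) powr (1 / (p - 1))"
          using p2 a by (intro holder_sum) (auto simp: field_simps)
        moreover have "(\<Sum>i\<in>{1..N}. a i powr ((p - 2) / (p - 1)) * (a i powr p) powr (1 / (p - 1))) = T"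
          unfolding T_def
        proof (intro sum.cong refl)
          fix j assume j: "j \<in> {1..N}"
          show "a j powr ((p - 2) / (p - 1)) * (a j powr p) powr (1 / (p - 1)) = (a j)^2"
          proof (cases "a j = 0")
            case True then show ?thesis by simp
          next
            case False
            then have aj: "a j > 0" using a[OF j] by simp
            have "a j powr ((p - 2) / (p - 1)) * (a j powr p) powr (1 / (p - 1))
                = a j powr ((p - 2) / (p - 1) + p / (p - 1))" by (simp add: powr_powr powr_add)
            also have "(p - 2) / (p - 1) + p / (p - 1) = real 2"
            proof -
              have "(p - 2) / (p - 1) + p / (p - 1) = ((p - 2) + p) / (p - 1)" by (rule add_divide_distrib[symmetric])
              also have "(p - 2) + p = 2 * (p - 1)" by simp
              also have "2 * (p - 1) / (p - 1) = 2" using p by (intro nonzero_mult_div_cancel_right) auto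
              finally show ?thesis by simp
            qed
            finally show ?thesis using aj by (simp add: powr_realpow)
          qed
        qed
        ultimately show ?thesis unfolding s1_def S_def by simp
      qed
      have H2: "S \<le> s1 powr (2 - p) * T powr (p - 1)" if p2: "p < 2"
      proof -
        have "(\<Sum>i\<in>{1..N}. a i powr (2 - p) * ((a i)^2) powr (p - 1))
          \<le> (\<Sum>i\<in>{1..N}. a i) powr (2 - p) * (\<Sum>i\<in>{1..N}. (a i)^2) powr (p - 1)"
          using p2 p a by (intro holder_sum) auto
        moreover have "(\<Sum>i\<in>{1..N}. a i powr (2 - p) * ((a i)^2) powr (p - 1)) = S"
          unfolding S_def
        proof (intro sum.cong refl)
          fix j assume j: "j \<in> {1..N}"
          show "a j powr (2 - p) * ((a j)^2) powr (p - 1) = a j powr p"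
          proof (cases "a j = 0")
            case True then show ?thesis using p by simp
          next
            case False
            then have aj: "a j > 0" using a[OF j] by simp
            have e: "(a j)^2 = a j powr 2" using powr_realpow[of "a j" 2] aj by simp
            have "a j powr (2 - p) * ((a j)^2) powr (p - 1) = a j powr (2 - p) * a j powr (2 * (p - 1))"
              by (simp only: e powr_powr)
            also have "\<dots> = a j powr ((2 - p) + 2 * (p - 1))" by (simp only: powr_add)
            also have "(2 - p) + 2 * (p - 1) = p" by simp
            finally show ?thesis .
          qed
        qed
        ultimately show ?thesis unfolding s1_def T_def by simp
      qed
      show ?thesis
        using core[OF N p s1 Spos T P sq SS PM CS H1 H2] by blast
    qed
    then show "real N * P powr (p / 2) \<le> S"
      and "p > 2 \<Longrightarrow> s1 powr p \<le> S * phi N p (real N * P powr (p / 2) / S)"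
      and "p < 2 \<Longrightarrow> S * phi N p (real N * P powr (p / 2) / S) \<le> s1 powr p" by auto
  qed
qed



lemma main_aux:
  fixes M :: "'a measure" and N :: nat and f :: "nat \<Rightarrow> 'a \<Rightarrow> real" and p :: real
  assumes N2: "N \<ge> 2" and p1: "p > 1" and p2: "p \<noteq> 2"
    and meas: "\<And>j. j \<in> {1..N} \<Longrightarrow> f j \<in> borel_measurable M"
    and nonneg: "\<And>j x. j \<in> {1..N} \<Longrightarrow> x \<in> space M \<Longrightarrow> f j x \<ge> 0"
    and pos: "0 < (\<Sum>j\<in>{1..N}. qpow_norm M p (f j))"
    and fin: "(\<Sum>j\<in>{1..N}. qpow_norm M p (f j)) < \<infinity>"
  shows "(p > 2 \<longrightarrow> qpow_norm M p (\<lambda>x. \<Sum>j\<in>{1..N}. f j x)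
              \<le> ennreal (phi N p (Gamma_p M p N f)) * (\<Sum>j\<in>{1..N}. qpow_norm M p (f j)))
       \<and> (p < 2 \<longrightarrow> ennreal (phi N p (Gamma_p M p N f)) * (\<Sum>j\<in>{1..N}. qpow_norm M p (f j))
              \<le> qpow_norm M p (\<lambda>x. \<Sum>j\<in>{1..N}. f j x))"
proof -
  define sf where "sf x = (\<Sum>j\<in>{1..N}. f j x)" for x
  define Sx where "Sx x = (\<Sum>j\<in>{1..N}. f j x powr p)" for x
  define Px where "Px x = inverse (real (N choose 2)) * (\<Sum>i\<in>{1..N}. \<Sum>j\<in>{i<..N}. f i x * f j x)" for x
  define gx where "gx x = Px x powr (p / 2)" for x
  have Npos: "real N > 0" using N2 by simp
  note pw = pointwise[OF N2 p1 p2, of "\<lambda>j. f j x" for x]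
  have pw1: "Px x \<ge> 0" "real N * gx x \<le> Sx x" "sf x powr p \<le> real N powr (p - 1) * Sx x"
     "Sx x \<le> sf x powr p"
     "p > 2 \<Longrightarrow> sf x powr p \<le> Sx x * phi N p (real N * gx x / Sx x)"
     "p < 2 \<Longrightarrow> Sx x * phi N p (real N * gx x / Sx x) \<le> sf x powr p"
    if x: "x \<in> space M" for x
    using pw[of x] nonneg[OF _ x] unfolding sf_def Sx_def Px_def gx_def by auto
  have sfnn: "sf x \<ge> 0" if "x \<in> space M" for x unfolding sf_def using nonneg that by (intro sum_nonneg) auto
  have Snn: "Sx x \<ge> 0" for x unfolding Sx_def by (intro sum_nonneg) auto
  have gnn: "gx x \<ge> 0" for x unfolding gx_def by simp
  have mf: "f j \<in> borel_measurable M" if "j \<in> {1..N}" for j using meas that .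
  have m_sf: "sf \<in> borel_measurable M" unfolding sf_def[abs_def] by (intro borel_measurable_sum mf)
  have m_S: "Sx \<in> borel_measurable M" unfolding Sx_def[abs_def]
    by (intro borel_measurable_sum powr_real_measurable mf borel_measurable_const)
  have m_P: "Px \<in> borel_measurable M" unfolding Px_def[abs_def]
    by (intro borel_measurable_times borel_measurable_const borel_measurable_sum mf) auto
  have m_g: "gx \<in> borel_measurable M" unfolding gx_def[abs_def]
    by (intro powr_real_measurable m_P borel_measurable_const)
  have m_sfp: "(\<lambda>x. sf x powr p) \<in> borel_measurable M"
    by (intro powr_real_measurable m_sf borel_measurable_const)
  have qf: "qpow_norm M p (f j) = (\<integral>\<^sup>+ x. ennreal (f j x powr p) \<partial>M)" if j: "j \<in> {1..N}" for j
    unfolding qpow_norm_def by (intro nn_integral_cong) (use nonneg[OF j] in simp)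
  have sumq: "(\<Sum>j\<in>{1..N}. qpow_norm M p (f j)) = (\<integral>\<^sup>+ x. ennreal (Sx x) \<partial>M)"
  proof -
    have "(\<Sum>j\<in>{1..N}. qpow_norm M p (f j)) = (\<Sum>j\<in>{1..N}. (\<integral>\<^sup>+ x. ennreal (f j x powr p) \<partial>M))"
      using qf by simp
    also have "\<dots> = (\<integral>\<^sup>+ x. (\<Sum>j\<in>{1..N}. ennreal (f j x powr p)) \<partial>M)"
      by (rule nn_integral_sum[symmetric]) (intro measurable_compose[OF _ measurable_ennreal] powr_real_measurable mf borel_measurable_const, simp)
    also have "\<dots> = (\<integral>\<^sup>+ x. ennreal (Sx x) \<partial>M)" unfolding Sx_def by (simp add: sum_ennreal)
    finally show ?thesis .
  qed
  have int_S: "integrable M Sx"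
    by (rule integrableI_nonneg[OF m_S]) (use Snn sumq fin in auto)
  have int_g: "integrable M gx"
  proof (rule Bochner_Integration.integrable_bound[OF int_S m_g])
    show "AE x in M. norm (gx x) \<le> norm (Sx x)"
    proof (rule AE_I2)
      fix x assume x: "x \<in> space M"
      have "1 * gx x \<le> real N * gx x" by (rule mult_right_mono) (use N2 gnn in auto)
      then have "gx x \<le> real N * gx x" by simp
      then show "norm (gx x) \<le> norm (Sx x)" using pw1(2)[OF x] gnn Snn by simp
    qed
  qed
  have int_sfp: "integrable M (\<lambda>x. sf x powr p)"
  proof (rule Bochner_Integration.integrable_bound[OF integrable_mult_right[OF int_S, of "real N powr (p - 1)"] m_sfp])
    show "AE x in M. norm (sf x powr p) \<le> norm (real N powr (p - 1) * Sx x)"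
      by (rule AE_I2) (use pw1(3) Snn in auto)
  qed
  define V where "V = integral\<^sup>L M Sx"
  define W where "W = integral\<^sup>L M gx"
  define U where "U = integral\<^sup>L M (\<lambda>x. sf x powr p)"
  have sumV: "(\<Sum>j\<in>{1..N}. qpow_norm M p (f j)) = ennreal V"
    unfolding sumq V_def by (rule nn_integral_eq_integral[OF int_S]) (use Snn in auto)
  have qU: "qpow_norm M p (\<lambda>x. \<Sum>j\<in>{1..N}. f j x) = ennreal U"
  proof -
    have "qpow_norm M p (\<lambda>x. \<Sum>j\<in>{1..N}. f j x) = (\<integral>\<^sup>+ x. ennreal (sf x powr p) \<partial>M)"
      unfolding qpow_norm_def sf_def[symmetric] by (intro nn_integral_cong) (use sfnn in simp)
    also have "\<dots> = ennreal U" unfolding U_def by (rule nn_integral_eq_integral[OF int_sfp]) auto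
    finally show ?thesis .
  qed
  have qW: "enn2real (qpow_norm M (p / 2) Px) = W"
  proof -
    have "qpow_norm M (p / 2) Px = (\<integral>\<^sup>+ x. ennreal (gx x) \<partial>M)"
      unfolding qpow_norm_def gx_def by (intro nn_integral_cong) (use pw1(1) in simp)
    also have "\<dots> = ennreal W" unfolding W_def by (rule nn_integral_eq_integral[OF int_g]) (use gnn in auto)
    finally show ?thesis using W_def gnn by (simp add: integral_nonneg)
  qed
  have V0: "V > 0" using pos unfolding sumV by simp
  have W0: "W \<ge> 0" unfolding W_def using gnn by (simp add: integral_nonneg)
  have NWV: "real N * W \<le> V" unfolding W_def V_def
    using integral_mono[OF integrable_mult_right[OF int_g, of "real N"] int_S pw1(2)] by simp
  define G where "G = real N * W / V"
  have Gam: "Gamma_p M p N f = G"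
    unfolding Gamma_p_def Px_def[symmetric] qW sumV G_def using V0 by simp
  have G0: "G \<ge> 0" and G1: "G \<le> 1" unfolding G_def using V0 W0 NWV Npos by auto
  have GV: "G * V = real N * W" unfolding G_def using V0 by simp
  have phi0: "phi N p 0 = 1" unfolding phi_def using r_pos[OF N2 p1] by simp
  have gam: "0 \<le> real N * gx x / Sx x \<and> real N * gx x / Sx x \<le> 1" if x: "x \<in> space M" for x
    using pw1(2)[OF x] Snn[of x] gnn[of x] Npos by (cases "Sx x = 0") (auto simp: divide_le_eq)
  have Sx0: "gx x = 0 \<and> sf x powr p = 0" if x: "x \<in> space M" and "Sx x = 0" for x
    using pw1(2,3)[OF x] gnn[of x] Npos that by (auto simp: mult_le_0_iff)
  have lin_int: "integral\<^sup>L M (\<lambda>x. phi N p G * Sx x + phid N p G * (real N * gx x - G * Sx x))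
      = phi N p G * V"
  proof -
    have "integral\<^sup>L M (\<lambda>x. phi N p G * Sx x + phid N p G * (real N * gx x - G * Sx x))
        = phi N p G * V + phid N p G * (real N * W - G * V)"
      unfolding V_def W_def using int_S int_g by simp
    then show ?thesis using GV by simp
  qed
  have int_lin: "integrable M (\<lambda>x. phi N p G * Sx x + phid N p G * (real N * gx x - G * Sx x))"
    using int_S int_g by auto
  show ?thesis
  proof (intro conjI impI)
    assume p2': "p > 2"
    have "U \<le> phi N p G * V"
    proof (cases "G = 0")
      case False
      then have Gp: "G > 0" using G0 by simp
      have "U \<le> integral\<^sup>L M (\<lambda>x. phi N p G * Sx x + phid N p G * (real N * gx x - G * Sx x))"
        unfolding U_def
      proof (rule integral_mono[OF int_sfp int_lin])
        fix x assume x: "x \<in> space M"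
        show "sf x powr p \<le> phi N p G * Sx x + phid N p G * (real N * gx x - G * Sx x)"
        proof (cases "Sx x = 0")
          case True then show ?thesis using Sx0[OF x] by simp
        next
          case False
          then have Sp: "Sx x > 0" using Snn[of x] by simp
          have t: "phi N p (real N * gx x / Sx x) \<le> phi N p G + phid N p G * (real N * gx x / Sx x - G)"
            using phi_tangent(1)[OF N2 _ _ Gp G1 p2'] gam[OF x] by auto
          have "sf x powr p \<le> Sx x * phi N p (real N * gx x / Sx x)" using pw1(5)[OF x p2'] .
          also have "\<dots> \<le> Sx x * (phi N p G + phid N p G * (real N * gx x / Sx x - G))"
            using t Sp by (intro mult_left_mono) auto
          also have "\<dots> = phi N p G * Sx x + phid N p G * (real N * gx x - G * Sx x)"
            using Sp by (simp add: field_simps)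
          finally show ?thesis .
        qed
      qed
      then show ?thesis using lin_int by simp
    next
      case True
      then have "W = 0" unfolding G_def using V0 Npos by simp
      then have "AE x in M. gx x = 0"
        using integral_nonneg_eq_0_iff_AE[OF int_g] gnn unfolding W_def by simp
      then have "AE x in M. sf x powr p \<le> Sx x"
      proof (rule AE_mp)
        show "AE x in M. gx x = 0 \<longrightarrow> sf x powr p \<le> Sx x"
        proof (rule AE_I2, rule impI)
          fix x assume x: "x \<in> space M" and g0: "gx x = 0"
          show "sf x powr p \<le> Sx x" using pw1(5)[OF x p2'] g0 phi0 by simp
        qed
      qed
      then have "U \<le> V" unfolding U_def V_def by (rule integral_mono_AE[OF int_sfp int_S])
      then show ?thesis using True phi0 by simp
    qed
    then have "ennreal U \<le> ennreal (phi N p G * V)" by (rule ennreal_leI)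
    also have "\<dots> = ennreal (phi N p G) * ennreal V" using V0 by (simp add: ennreal_mult'')
    finally show "qpow_norm M p (\<lambda>x. \<Sum>j\<in>{1..N}. f j x)
              \<le> ennreal (phi N p (Gamma_p M p N f)) * (\<Sum>j\<in>{1..N}. qpow_norm M p (f j))"
      unfolding qU sumV Gam .
  next
    assume p2': "p < 2"
    have "phi N p G * V \<le> U"
    proof (cases "G = 0")
      case False
      then have Gp: "G > 0" using G0 by simp
      have "integral\<^sup>L M (\<lambda>x. phi N p G * Sx x + phid N p G * (real N * gx x - G * Sx x)) \<le> U"
        unfolding U_def
      proof (rule integral_mono[OF int_lin int_sfp])
        fix x assume x: "x \<in> space M"
        show "phi N p G * Sx x + phid N p G * (real N * gx x - G * Sx x) \<le> sf x powr p"
        proof (cases "Sx x = 0")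
          case True then show ?thesis using Sx0[OF x] by simp
        next
          case False
          then have Sp: "Sx x > 0" using Snn[of x] by simp
          have t: "phi N p G + phid N p G * (real N * gx x / Sx x - G) \<le> phi N p (real N * gx x / Sx x)"
            using phi_tangent(2)[OF N2 _ _ Gp G1 p1 p2'] gam[OF x] by auto
          have "phi N p G * Sx x + phid N p G * (real N * gx x - G * Sx x)
              = Sx x * (phi N p G + phid N p G * (real N * gx x / Sx x - G))"
            using Sp by (simp add: field_simps)
          also have "\<dots> \<le> Sx x * phi N p (real N * gx x / Sx x)"
            using t Sp by (intro mult_left_mono) auto
          also have "\<dots> \<le> sf x powr p" using pw1(6)[OF x p2'] .
          finally show ?thesis .
        qed
      qed
      then show ?thesis using lin_int by simp
    next
      case True
      have "V \<le> U" unfolding U_def V_def by (rule integral_mono[OF int_S int_sfp]) (use pw1(4) in auto)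
      then show ?thesis using True phi0 by simp
    qed
    then have "ennreal (phi N p G * V) \<le> ennreal U" by (rule ennreal_leI)
    moreover have "ennreal (phi N p G * V) = ennreal (phi N p G) * ennreal V" using V0 by (simp add: ennreal_mult'')
    ultimately show "ennreal (phi N p (Gamma_p M p N f)) * (\<Sum>j\<in>{1..N}. qpow_norm M p (f j))
              \<le> qpow_norm M p (\<lambda>x. \<Sum>j\<in>{1..N}. f j x)"
      unfolding qU sumV Gam by simp
  qed
qed


theorem mainTheorem1:
  fixes M :: "'a measure" and N :: nat and f :: "nat \<Rightarrow> 'a \<Rightarrow> real" and p :: real
  assumes N2: "N \<ge> 2"
    and meas: "\<And>j. j \<in> {1..N} \<Longrightarrow> f j \<in> borel_measurable M"
    and nonneg: "\<And>j x. j \<in> {1..N} \<Longrightarrow> x \<in> space M \<Longrightarrow> f j x \<ge> 0"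
    and pos: "0 < (\<Sum>j\<in>{1..N}. qpow_norm M p (f j))"
    and fin: "(\<Sum>j\<in>{1..N}. qpow_norm M p (f j)) < \<infinity>"
  shows "(2 < p \<longrightarrow>
            qpow_norm M p (\<lambda>x. \<Sum>j\<in>{1..N}. f j x)
              \<le> ennreal ((1 + (real N - 1) * Gamma_p M p N f powr r_exp N p) powr (p - 1))
                  * (\<Sum>j\<in>{1..N}. qpow_norm M p (f j)))
       \<and> (1 < p \<and> p < 2 \<longrightarrow>
            qpow_norm M p (\<lambda>x. \<Sum>j\<in>{1..N}. f j x)
              \<ge> ennreal ((1 + (real N - 1) * Gamma_p M p N f powr r_exp N p) powr (p - 1))
                  * (\<Sum>j\<in>{1..N}. qpow_norm M p (f j)))"
proof (intro conjI impI)
  assume p: "2 < p"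
  then have "p > 1" "p \<noteq> 2" by auto
  from main_aux[OF N2 this meas nonneg pos fin] p
  show "qpow_norm M p (\<lambda>x. \<Sum>j\<in>{1..N}. f j x)
              \<le> ennreal ((1 + (real N - 1) * Gamma_p M p N f powr r_exp N p) powr (p - 1))
                  * (\<Sum>j\<in>{1..N}. qpow_norm M p (f j))"
    unfolding phi_def by blast
next
  assume p: "1 < p \<and> p < 2"
  then have "p > 1" "p \<noteq> 2" by auto
  from main_aux[OF N2 this meas nonneg pos fin] p
  show "qpow_norm M p (\<lambda>x. \<Sum>j\<in>{1..N}. f j x)
              \<ge> ennreal ((1 + (real N - 1) * Gamma_p M p N f powr r_exp N p) powr (p - 1))
                  * (\<Sum>j\<in>{1..N}. qpow_norm M p (f j))"
    unfolding phi_def by blast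
qed

end
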